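(* Let $p$ be a prime, $m$ a positive integer, let $e,k$ be integers with $e\geq2$ and $1\leq k\leq e-1$, and let $b\ge2$ be an integer. If $0\leq i\leq p^{e-k-1}$ is such that $b+i\leq p^{e-k}$ and $i\leq b$, then $$d_b\big(\mathcal{C}_{p^e-p^{e-k}+i}\big)=p^k(b+i).$$
   Context: For $0\le t\le p^e$, $\mathcal{C}_t$ denotes the cyclic code $\langle (x-1)^t\rangle\subseteq \mathbb{F}_{p^m}[x]/\langle x^{p^e}-1\rangle$, with polynomials identified with their coefficient vectors in $\mathbb{F}_{p^m}^{p^e}$. For $c\in\mathbb{F}_{p^m}^{n}$, $\pi_b(c)$ is the list of the $n$ cyclically consecutive $b$-tuples $(c_j,\dots,c_{j+b-1})$ (indices mod $n$), $d_b(c,c')=d_H(\pi_b(c),\pi_b(c'))$, and $d_b(\mathcal{C})$ is the minimum of $d_b(c,c')$ over distinct $c,c'\in\mathcal{C}$. *)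

theory Defs
  imports "HOL-Computational_Algebra.Polynomial" "HOL-Library.Cardinality"
begin

text \<open>Cyclic code generated by (x-1)^t in F[x]/(x^n - 1); codewords are the
  coefficient vectors (lists of length n) of the residues g*(x-1)^t mod (x^n-1).\<close>
definition cyclic_code :: "nat \<Rightarrow> nat \<Rightarrow> 'a::field list set" where
  "cyclic_code n t =
     {map (coeff ((g * [:-1, 1:] ^ t) mod (monom 1 n - 1))) [0..<n] | g. True}"

definition symbol_read :: "nat \<Rightarrow> 'a list \<Rightarrow> 'a list list" where
  "symbol_read b c =
     map (\<lambda>j. map (\<lambda>l. c ! ((j + l) mod length c)) [0..<b]) [0..<length c]"

definition hamming_dist :: "'a list \<Rightarrow> 'a list \<Rightarrow> nat" where
  "hamming_dist xs ys = card {j. j < length xs \<and> xs ! j \<noteq> ys ! j}"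

definition b_dist :: "nat \<Rightarrow> 'a list \<Rightarrow> 'a list \<Rightarrow> nat" where
  "b_dist b c c' = hamming_dist (symbol_read b c) (symbol_read b c')"

definition min_b_dist :: "nat \<Rightarrow> 'a list set \<Rightarrow> nat" where
  "min_b_dist b C = Inf {b_dist b c c' | c c'. c \<in> C \<and> c' \<in> C \<and> c \<noteq> c'}"

end

theory Submission
  imports Defs "HOL-Number_Theory.Residues" "HOL-Number_Theory.Cong"
begin


lemma char_eq:
  assumes "prime p" "m > 0" "CARD('a::{finite,field}) = p ^ m"
  shows "CHAR('a) = p"
proof -
  have pos: "CHAR('a) > 0" by (rule finite_imp_CHAR_pos) simp
  hence pr: "prime CHAR('a)" by (rule prime_CHAR_semidom)
  have "CHAR('a) dvd p ^ m" using CHAR_dvd_CARD[where 'a='a] assms(3) by simp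
  hence "CHAR('a) dvd p" using pr prime_dvd_power by blast
  thus ?thesis using pr assms(1) primes_dvd_imp_eq by blast
qed

lemma neg1_pow:
  assumes "prime CHAR('b::comm_ring_1)"
  shows "(-1::'b) ^ (CHAR('b) ^ j) = -1"
proof (induction j)
  case 0 then show ?case by simp
next
  case (Suc j)
  have "(-1::'b) ^ (CHAR('b) ^ Suc j) = ((-1) ^ (CHAR('b) ^ j)) ^ CHAR('b)"
    by (simp add: power_mult[symmetric] mult.commute)
  also have "\<dots> = (-1) ^ CHAR('b)" using Suc by simp
  also have "\<dots> = - (1 ^ CHAR('b))" by (rule minus_power_prime_CHAR) (use assms in auto)
  finally show ?case by simp
qed

lemma frob:
  fixes dummy :: "'a::field"
  assumes "prime CHAR('a)"
  shows "([:-1, 1:] :: 'a poly) ^ (CHAR('a) ^ j) = Polynomial.monom 1 (CHAR('a) ^ j) - 1"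
proof -
  have pr: "prime CHAR('a poly)" using assms by simp
  have "([:-1, 1:] :: 'a poly) = Polynomial.monom 1 1 + (-1)" by (simp add: Polynomial.monom_altdef one_pCons)
  hence "([:-1, 1:] :: 'a poly) ^ (CHAR('a) ^ j) = (Polynomial.monom 1 1 + (-1)) ^ (CHAR('a poly) ^ j)" by simp
  also have "\<dots> = Polynomial.monom 1 1 ^ (CHAR('a poly) ^ j) + (-1) ^ (CHAR('a poly) ^ j)"
    by (rule freshmans_dream') (use pr in auto)
  also have "(-1::'a poly) ^ (CHAR('a poly) ^ j) = -1" by (rule neg1_pow[OF pr])
  finally show ?thesis by (simp add: monom_power)
qed




lemma mod_inj_aux:
  fixes j0 o1 o2 q :: nat
  assumes "o1 < q" "o2 < q" "(j0 + o1) mod q = (j0 + o2) mod q"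
  shows "o1 = o2"
  using cong_add_lcancel_nat[of j0 o1 o2 q] assms by (simp add: cong_def)

lemma comb:
  fixes f :: "nat \<Rightarrow> bool" and q b i :: nat
  assumes bi: "b + i \<le> q" and ib: "i \<le> b" and ex: "\<exists>x<q. f x"
    and hyp: "\<forall>a<q. \<exists>x<q. i \<le> x \<and> f ((a + x) mod q)"
  shows "b + i \<le> card {j. j < q \<and> (\<exists>l<b. f ((j + l) mod q))}"
proof (cases "\<forall>j<q. \<exists>l<b. f ((j + l) mod q)")
  case True
  hence "{j. j < q \<and> (\<exists>l<b. f ((j + l) mod q))} = {..<q}" by auto
  thus ?thesis using bi by simp
next
  case False
  then obtain j0 where j0: "j0 < q" "\<forall>l<b. \<not> f ((j0 + l) mod q)" by auto
  define A where "A = {x. x < q \<and> f ((j0 + x) mod q)}"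
  have finA: "finite A" unfolding A_def by simp
  obtain y where y: "y < q" "f y" using ex by auto
  have "(y + q - j0) mod q \<in> A"
  proof -
    have "(j0 + (y + q - j0) mod q) mod q = (j0 + (y + q - j0)) mod q" by (simp add: mod_add_right_eq)
    also have "j0 + (y + q - j0) = y + q" using j0 by simp
    finally show ?thesis unfolding A_def using y by simp
  qed
  hence neA: "A \<noteq> {}" by auto
  have geb: "\<And>x. x \<in> A \<Longrightarrow> b \<le> x" unfolding A_def using j0 not_le by auto
  define a0 where "a0 = Min A"
  define a1 where "a1 = Max A"
  have a0A: "a0 \<in> A" unfolding a0_def using finA neA by simp
  have a1A: "a1 \<in> A" unfolding a1_def using finA neA by simp
  have a0min: "\<And>x. x \<in> A \<Longrightarrow> a0 \<le> x" unfolding a0_def using finA by simp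
  have a1max: "\<And>x. x \<in> A \<Longrightarrow> x \<le> a1" unfolding a1_def using finA by simp
  have a1q: "a1 < q" using a1A unfolding A_def by simp
  have ba0: "b \<le> a0" using geb a0A by simp
  have fa0: "f ((j0 + a0) mod q)" using a0A unfolding A_def by simp
  have fa1: "f ((j0 + a1) mod q)" using a1A unfolding A_def by simp
  have iD: "i \<le> a1 - a0"
  proof -
    obtain x where x: "x < q" "i \<le> x" "f (((j0 + a0) mod q + x) mod q)"
      using hyp j0 by (meson mod_less_divisor le_less_trans zero_le gr0I)
    have fx: "f ((j0 + (a0 + x)) mod q)" using x(3) by (simp add: mod_add_left_eq add.assoc)
    show ?thesis
    proof (cases "a0 + x < q")
      case True
      hence "a0 + x \<in> A" unfolding A_def using fx by simp
      thus ?thesis using a1max x(2) by fastforce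
    next
      case False
      define z where "z = a0 + x - q"
      have zq: "z < q" unfolding z_def using a1q a0A a1max x(1) by fastforce
      have "(j0 + (a0 + x)) mod q = (j0 + z + q) mod q" unfolding z_def using False by simp
      also have "\<dots> = (j0 + z) mod q" by simp
      finally have "z \<in> A" unfolding A_def using zq fx by simp
      hence "a0 \<le> z" by (rule a0min)
      thus ?thesis unfolding z_def using x(1) False by simp
    qed
  qed
  define O1 where "O1 = {a0 + 1 - b..a0}"
  define O2 where "O2 = {a1 + 1 - i..a1}"
  have disj: "O1 \<inter> O2 = {}" unfolding O1_def O2_def using iD by auto
  have cO: "card (O1 \<union> O2) = b + i"
    using card_Un_disjoint[OF _ _ disj] ba0 iD unfolding O1_def O2_def by simp
  define h where "h w = (j0 + w) mod q" for w
  have Oq: "O1 \<union> O2 \<subseteq> {..<q}" unfolding O1_def O2_def using a1q a0A a1max by fastforce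
  have inj: "inj_on h (O1 \<union> O2)"
    unfolding inj_on_def h_def using Oq mod_inj_aux by blast
  have sub: "h ` (O1 \<union> O2) \<subseteq> {j. j < q \<and> (\<exists>l<b. f ((j + l) mod q))}"
  proof
    fix j assume "j \<in> h ` (O1 \<union> O2)"
    then obtain w where w: "w \<in> O1 \<union> O2" "j = h w" by auto
    have jq: "j < q" using w(2) j0 unfolding h_def by simp
    have "\<exists>l<b. f ((j + l) mod q)"
    proof (cases "w \<in> O1")
      case True
      hence "a0 - w < b" "w \<le> a0" unfolding O1_def by auto
      moreover have "(j + (a0 - w)) mod q = (j0 + a0) mod q"
      proof -
        have "(j + (a0 - w)) mod q = (j0 + w + (a0 - w)) mod q"
          using w(2) unfolding h_def by (metis mod_add_left_eq)
        thus ?thesis using \<open>w \<le> a0\<close> by simp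
      qed
      ultimately show ?thesis using fa0 by metis
    next
      case False
      hence "w \<in> O2" using w by simp
      hence "a1 - w < b" "w \<le> a1" unfolding O2_def using ib by auto
      moreover have "(j + (a1 - w)) mod q = (j0 + a1) mod q"
      proof -
        have "(j + (a1 - w)) mod q = (j0 + w + (a1 - w)) mod q"
          using w(2) unfolding h_def by (metis mod_add_left_eq)
        thus ?thesis using \<open>w \<le> a1\<close> by simp
      qed
      ultimately show ?thesis using fa1 by metis
    qed
    thus "j \<in> {j. j < q \<and> (\<exists>l<b. f ((j + l) mod q))}" using jq by simp
  qed
  have "card (h ` (O1 \<union> O2)) \<le> card {j. j < q \<and> (\<exists>l<b. f ((j + l) mod q))}"
    by (rule card_mono[OF _ sub]) simp
  thus ?thesis using card_image[OF inj] cO by simp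
qed




lemma geo:
  "(Polynomial.monom 1 q - 1) * (\<Sum>j<N. Polynomial.monom 1 (q*j)) = Polynomial.monom 1 (q*N) - (1::'a::comm_ring_1 poly)"
proof (induction N)
  case 0 then show ?case by simp
next
  case (Suc N)
  have "(Polynomial.monom 1 q - 1) * (\<Sum>j<Suc N. Polynomial.monom 1 (q*j)) =
        (Polynomial.monom 1 q - 1) * (\<Sum>j<N. Polynomial.monom 1 (q*j)) + (Polynomial.monom 1 q - 1) * Polynomial.monom 1 (q*N)"
    by (simp add: distrib_left)
  also have "(Polynomial.monom 1 q - 1) * Polynomial.monom 1 (q*N) = Polynomial.monom 1 (q + q*N) - (Polynomial.monom 1 (q*N) :: 'a poly)"
    by (simp add: left_diff_distrib mult_monom)
  also note Suc.IH
  also have "Polynomial.monom 1 (q*N) - 1 + (Polynomial.monom 1 (q + q*N) - Polynomial.monom 1 (q*N)) = Polynomial.monom 1 (q + q*N) - (1 :: 'a poly)"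
    by simp
  also have "\<dots> = Polynomial.monom 1 (q * Suc N) - 1" by simp
  finally show ?case .
qed

lemma coeffRS:
  fixes R :: "'a::comm_ring_1 poly"
  assumes hz: "\<forall>y\<ge>q. Polynomial.coeff R y = 0" and x: "x < N*q"
  shows "Polynomial.coeff (R * (\<Sum>j<N. Polynomial.monom 1 (q*j))) x = Polynomial.coeff R (x mod q)"
proof -
  have q: "q > 0" using x by (cases q) auto
  have "Polynomial.coeff (R * (\<Sum>j<N. Polynomial.monom 1 (q*j))) x = (\<Sum>j<N. Polynomial.coeff (Polynomial.monom 1 (q*j) * R) x)"
    by (simp add: sum_distrib_left coeff_sum mult.commute)
  also have "\<dots> = (\<Sum>j<N. if j = x div q then Polynomial.coeff R (x mod q) else 0)"
  proof (rule sum.cong[OF refl])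
    fix j assume "j \<in> {..<N}"
    have cm: "Polynomial.coeff (Polynomial.monom 1 (q*j) * R) x = (if x < q*j then 0 else Polynomial.coeff R (x - q*j))"
      unfolding coeff_monom_mult by simp
    show "Polynomial.coeff (Polynomial.monom 1 (q*j) * R) x = (if j = x div q then Polynomial.coeff R (x mod q) else 0)"
    proof (cases "j = x div q")
      case True
      have nl: "\<not> x < q * j" using True by (simp add: not_less)
      have "x - q * j = x mod q" using True by (simp add: minus_mult_div_eq_mod)
      then show ?thesis using True nl cm by simp
    next
      case False
      show ?thesis
      proof (cases "x < q*j")
        case True then show ?thesis using False cm by simp
      next
        case c: False
        hence "j \<le> x div q" using q by (simp add: less_eq_div_iff_mult_less_eq mult.commute)
        hence "j < x div q" using False by simp
        hence "q * (j+1) \<le> x" using q by (metis Suc_eq_plus1 Suc_leI div_le_mono mult.commute div_mult_self1_is_m le_div_geq less_eq_div_iff_mult_less_eq)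
        hence "q \<le> x - q*j" by (simp add: algebra_simps)
        then show ?thesis using False c hz cm by simp
      qed
    qed
  qed
  also have "\<dots> = Polynomial.coeff R (x mod q)"
  proof -
    have "x div q < N" using x q by (simp add: div_less_iff_less_mult)
    thus ?thesis by (simp add: sum.delta)
  qed
  finally show ?thesis .
qed

lemma rot_hyp:
  fixes D :: "'a::field poly"
  assumes D0: "D \<noteq> 0" and dq: "degree D < q" and dv: "[:-1,1:]^i dvd D"
    and dvM: "[:-1,1:]^i dvd (Polynomial.monom 1 q - 1 :: 'a poly)"
  shows "\<forall>a<q. \<exists>x<q. i \<le> x \<and> Polynomial.coeff D ((a + x) mod q) \<noteq> 0"
proof (intro allI impI, rule ccontr)
  fix a assume aq: "a < q" and nh: "\<not> (\<exists>x<q. i \<le> x \<and> Polynomial.coeff D ((a + x) mod q) \<noteq> 0)"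
  have hz: "\<And>y. q \<le> y \<Longrightarrow> Polynomial.coeff D y = 0" using dq by (simp add: coeff_eq_0)
  define L where "L = poly_cutoff a D"
  define H where "H = poly_shift a D"
  define E where "E = H + Polynomial.monom 1 (q - a) * L"
  have c1: "D = L + Polynomial.monom 1 a * H"
    by (rule poly_eqI) (simp add: L_def H_def coeff_poly_cutoff coeff_poly_shift coeff_monom_mult)
  have c2: "Polynomial.monom 1 (q - a) * D = E + (Polynomial.monom 1 q - 1) * H"
  proof -
    have "Polynomial.monom 1 (q - a) * D = Polynomial.monom 1 (q - a) * L + Polynomial.monom 1 (q - a) * Polynomial.monom 1 a * H"
      by (subst c1) (simp add: distrib_left mult.assoc)
    also have "Polynomial.monom 1 (q - a) * Polynomial.monom 1 a = (Polynomial.monom 1 q :: 'a poly)" using aq by (simp add: mult_monom)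
    finally show ?thesis unfolding E_def by (simp add: algebra_simps)
  qed
  have dvE: "[:-1,1:]^i dvd E"
  proof -
    have "E = Polynomial.monom 1 (q - a) * D - (Polynomial.monom 1 q - 1) * H" using c2 by simp
    moreover have "[:-1,1:]^i dvd Polynomial.monom 1 (q - a) * D" using dv by (rule dvd_mult)
    moreover have "[:-1,1:]^i dvd (Polynomial.monom 1 q - 1) * H" using dvM by (rule dvd_mult2)
    ultimately show ?thesis by (simp add: dvd_diff)
  qed
  have c3: "Polynomial.coeff E x = (if x < q then Polynomial.coeff D ((x + a) mod q) else 0)" for x
  proof -
    have e: "Polynomial.coeff E x = Polynomial.coeff D (x + a) + (if x < q - a then 0 else (if x - (q - a) < a then Polynomial.coeff D (x - (q - a)) else 0))"
      unfolding E_def by (simp add: L_def H_def coeff_poly_cutoff coeff_poly_shift coeff_monom_mult)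
    show ?thesis
    proof (cases "x < q - a")
      case True then show ?thesis using e by simp
    next
      case False
      hence "Polynomial.coeff D (x + a) = 0" using hz by simp
      moreover have "x < q \<Longrightarrow> (x + a) mod q = x - (q - a)" using False aq
        by (simp add: le_mod_geq)
      ultimately show ?thesis using e False hz by auto
    qed
  qed
  have E0: "E \<noteq> 0"
  proof
    assume "E = 0"
    define y where "y = degree D"
    have cy: "Polynomial.coeff D y \<noteq> 0" unfolding y_def using D0 by simp
    have yq: "y < q" unfolding y_def using dq .
    define x where "x = (y + q - a) mod q"
    have xq: "x < q" unfolding x_def using aq by simp
    have "(x + a) mod q = (y + q - a + a) mod q" unfolding x_def by (simp add: mod_add_left_eq)
    also have "\<dots> = y" using aq yq by simp
    finally have "Polynomial.coeff E x \<noteq> 0" using c3 xq cy by simp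
    thus False using \<open>E = 0\<close> by simp
  qed
  define d where "d = degree E"
  have "Polynomial.coeff E d \<noteq> 0" unfolding d_def using E0 by simp
  hence dq': "d < q" and cd: "Polynomial.coeff D ((d + a) mod q) \<noteq> 0" using c3[of d] by (auto split: if_splits)
  have "d < i" using nh dq' cd by (metis add.commute not_le)
  moreover have "i \<le> d" unfolding d_def using dvd_imp_degree_le[OF dvE E0] by (simp add: degree_linear_power)
  ultimately show False by simp
qed

lemma cw:
  fixes g :: "'a::field poly"
  assumes hq: "[:-1,1:]^q = (Polynomial.monom 1 q - 1 :: 'a poly)"
    and hn: "[:-1,1:]^n = (Polynomial.monom 1 n - 1 :: 'a poly)"
    and nN: "n = N * q" and N1: "1 \<le> N" and q0: "0 < q" and tt: "t = q * (N - 1) + i"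
  shows "map (Polynomial.coeff ((g * [:-1,1:]^t) mod (Polynomial.monom 1 n - 1))) [0..<n]
       = map (\<lambda>x. Polynomial.coeff ((g * [:-1,1:]^i) mod (Polynomial.monom 1 q - 1)) (x mod q)) [0..<n]"
proof -
  define X1 where "X1 = ([:-1,1:] :: 'a poly)"
  define Mq where "Mq = (Polynomial.monom 1 q - 1 :: 'a poly)"
  define Mn where "Mn = (Polynomial.monom 1 n - 1 :: 'a poly)"
  define R where "R = (g * X1^i) mod Mq"
  define S where "S = (\<Sum>j<N. Polynomial.monom 1 (q*j) :: 'a poly)"
  define A where "A = (g * X1^i) div Mq"
  have X10: "X1 \<noteq> 0" unfolding X1_def by simp
  have dMq: "degree Mq = q" unfolding Mq_def using hq[symmetric] by (simp add: degree_linear_power)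
  have Mq0: "Mq \<noteq> 0" using dMq q0 by auto
  have dMn: "degree Mn = n" unfolding Mn_def using hn[symmetric] by (simp add: degree_linear_power)
  have MqN: "Mq ^ N = Mn"
  proof -
    have "Mq ^ N = ([:-1,1:]^q)^N" using hq by (simp add: Mq_def)
    also have "\<dots> = ([:-1,1:]::'a poly)^n" using nN by (simp add: power_mult[symmetric] mult.commute)
    also have "\<dots> = Mn" using hn by (simp add: Mn_def)
    finally show ?thesis .
  qed
  have MS: "Mq ^ (N - 1) = S"
  proof -
    have "Mq * S = Mn" unfolding Mq_def S_def Mn_def using geo[of q N] nN by (simp add: mult.commute)
    also have "Mn = Mq * Mq ^ (N - 1)" using MqN N1 by (cases N) auto
    finally show ?thesis using Mq0 by simp
  qed
  have dS: "degree S = q * (N - 1)"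
    unfolding MS[symmetric] Mq_def hq[symmetric] by (simp add: power_mult[symmetric] degree_linear_power)
  have Xt: "X1 ^ t = X1 ^ i * Mq ^ (N - 1)"
    unfolding tt Mq_def hq[symmetric] X1_def by (simp add: power_add power_mult mult.commute)
  have "g * X1 ^ t = (A * Mq + R) * Mq ^ (N - 1)"
    unfolding A_def R_def Xt by (simp add: div_mult_mod_eq mult.assoc)
  also have "\<dots> = A * (Mq * Mq ^ (N - 1)) + R * Mq ^ (N - 1)" by (simp add: algebra_simps)
  also have "Mq * Mq ^ (N - 1) = Mn" using MqN N1 by (cases N) auto
  also note MS
  finally have gt: "g * X1 ^ t = A * Mn + R * S" .
  have hz: "\<forall>y\<ge>q. Polynomial.coeff R y = 0"
  proof (cases "R = 0")
    case False
    hence "degree R < q" unfolding R_def using degree_mod_less[OF Mq0] dMq by (metis R_def)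
    thus ?thesis by (auto intro: coeff_eq_0)
  qed simp
  have dRS: "degree (R * S) < n"
  proof (cases "R = 0")
    case True then show ?thesis using q0 nN N1 by simp
  next
    case False
    hence "degree R < q" unfolding R_def using degree_mod_less[OF Mq0] dMq by (metis R_def)
    hence "degree R + degree S < n" using dS nN N1 by (cases N) (auto simp: algebra_simps)
    thus ?thesis using degree_mult_le[of R S] by simp
  qed
  have W: "(g * X1 ^ t) mod Mn = R * S"
    unfolding gt using mod_poly_less[of "R * S" Mn] dRS dMn by (simp add: mod_mult_self3 add.commute)
  show ?thesis
    unfolding X1_def[symmetric] Mn_def[symmetric] Mq_def[symmetric] R_def[symmetric] W
    unfolding S_def using coeffRS[OF hz] nN by (simp add: mult.commute)
qed




lemma count_mod:
  fixes q N :: nat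
  assumes q: "0 < q"
  shows "card {j. j < N*q \<and> P (j mod q)} = N * card {r. r < q \<and> P r}"
proof -
  define h where "h = (\<lambda>(a::nat, r::nat). a*q + r)"
  have eq: "{j. j < N*q \<and> P (j mod q)} = h ` ({..<N} \<times> {r. r<q \<and> P r})"
  proof (intro equalityI subsetI)
    fix j assume "j \<in> {j. j < N*q \<and> P (j mod q)}"
    hence j: "j < N*q" "P (j mod q)" by auto
    have "j div q < N" using j(1) q by (simp add: div_less_iff_less_mult)
    moreover have "j = h (j div q, j mod q)" unfolding h_def by simp
    ultimately show "j \<in> h ` ({..<N} \<times> {r. r<q \<and> P r})" using j(2) q by force
  next
    fix j assume "j \<in> h ` ({..<N} \<times> {r. r<q \<and> P r})"
    then obtain a r where ar: "a<N" "r<q" "P r" "j = a*q+r" unfolding h_def by auto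
    have "a*q + r < (a+1)*q" using ar by simp
    also have "(a+1)*q \<le> N*q" using ar by (intro mult_le_mono1) simp
    finally have "j < N*q" using ar by simp
    moreover have "j mod q = r" using ar by simp
    ultimately show "j \<in> {j. j < N*q \<and> P (j mod q)}" using ar by simp
  qed
  have inj: "inj_on h ({..<N} \<times> {r. r<q \<and> P r})"
  proof (rule inj_onI)
    fix x y assume "x \<in> {..<N} \<times> {r. r<q \<and> P r}" "y \<in> {..<N} \<times> {r. r<q \<and> P r}" "h x = h y"
    then obtain a r a' r' where "x = (a,r)" "y = (a',r')" "r<q" "r'<q" "a*q+r = a'*q+r'"
      unfolding h_def by auto
    moreover have "a = (a*q+r) div q" "r = (a*q+r) mod q" using \<open>r<q\<close> q by simp_all
    moreover have "a' = (a'*q+r') div q" "r' = (a'*q+r') mod q" using \<open>r'<q\<close> q by simp_all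
    ultimately show "x = y" by metis
  qed
  show ?thesis unfolding eq card_image[OF inj] by (simp add: card_cartesian_product)
qed

lemma bdist_formula:
  fixes u v :: "nat \<Rightarrow> 'a"
  assumes c: "c = map (\<lambda>x. u (x mod q)) [0..<n]" and c': "c' = map (\<lambda>x. v (x mod q)) [0..<n]"
    and nN: "n = N*q" and q: "0 < q"
  shows "b_dist b c c' = N * card {j. j<q \<and> (\<exists>l<b. u ((j+l) mod q) \<noteq> v ((j+l) mod q))}"
proof -
  define P where "P r = (\<exists>l<b. u ((r+l) mod q) \<noteq> v ((r+l) mod q))" for r
  have lc: "length c = n" "length c' = n" using c c' by simp_all
  have "{j. j < length (symbol_read b c) \<and> symbol_read b c ! j \<noteq> symbol_read b c' ! j}
      = {j. j < N*q \<and> P (j mod q)}"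
  proof (intro Collect_cong)
    fix j
    show "(j < length (symbol_read b c) \<and> symbol_read b c ! j \<noteq> symbol_read b c' ! j) =
          (j < N*q \<and> P (j mod q))"
    proof (cases "j < n")
      case False then show ?thesis using lc nN by (simp add: symbol_read_def)
    next
      case True
      have qn: "q dvd n" using nN by simp
      have e: "\<And>l. c ! ((j+l) mod n) = u ((j mod q + l) mod q)"
              "\<And>l. c' ! ((j+l) mod n) = v ((j mod q + l) mod q)"
        using True q c c' qn by (simp_all add: mod_mod_cancel mod_add_left_eq)
      have "symbol_read b c ! j \<noteq> symbol_read b c' ! j \<longleftrightarrow> P (j mod q)"
        using True lc unfolding symbol_read_def P_def by (auto simp: e)
      thus ?thesis using True lc nN by (simp add: symbol_read_def)
    qed
  qed
  thus ?thesis unfolding b_dist_def hamming_dist_def using count_mod[OF q, of N P]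
    by (simp add: P_def)
qed




theorem theorem2p10:
  fixes p m e k b i :: nat
  assumes "prime p" and "m > 0"
    and "CARD('a) = p ^ m"
    and "e \<ge> 2" and "1 \<le> k" and "k \<le> e - 1"
    and "b \<ge> 2"
    and "i \<le> p ^ (e - k - 1)" and "b + i \<le> p ^ (e - k)" and "i \<le> b"
  shows "min_b_dist b (cyclic_code (p ^ e) (p ^ e - p ^ (e - k) + i) :: ('a::{finite, field}) list set)
         = p ^ k * (b + i)"
proof -
  have charp: "CHAR('a) = p" using char_eq assms(1-3) by blast
  have prc: "prime CHAR('a)" using charp assms(1) by simp
  define q where "q = p ^ (e - k)"
  define N where "N = p ^ k"
  have p2: "2 \<le> p" using assms(1) prime_ge_2_nat by blast
  have q0: "0 < q" unfolding q_def using p2 by simp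
  have N1: "1 \<le> N" unfolding N_def using p2 by simp
  have nN: "p ^ e = N * q"
    unfolding N_def q_def using assms(6) assms(4) by (simp add: power_add[symmetric])
  have hq: "[:-1,1:]^q = (Polynomial.monom 1 q - 1 :: 'a poly)" using frob[OF prc, of "e-k"] charp q_def by simp
  have hn: "[:-1,1:]^(p^e) = (Polynomial.monom 1 (p^e) - 1 :: 'a poly)" using frob[OF prc, of "e"] charp by simp
  have bq: "b + i \<le> q" using assms(9) q_def by simp
  have iq: "i < q" using bq assms(7) by simp
  have tt: "p ^ e - q + i = q * (N - 1) + i" unfolding nN by (simp add: diff_mult_distrib2 mult.commute)
  define Mq where "Mq = (Polynomial.monom 1 q - 1 :: 'a poly)"
  define Rf where "Rf g = (g * [:-1,1:]^i) mod Mq" for g :: "'a poly"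
  define cwf where "cwf g = map (\<lambda>x. Polynomial.coeff (Rf g) (x mod q)) [0..<p^e]" for g
  have cweq: "(cyclic_code (p ^ e) (p ^ e - q + i) :: 'a list set) = {cwf g | g. True}"
    unfolding cyclic_code_def cwf_def Rf_def Mq_def cw[OF hq hn nN N1 q0 tt] ..
  have dMq: "degree Mq = q" unfolding Mq_def using hq[symmetric] by (simp add: degree_linear_power)
  have Mq0: "Mq \<noteq> 0" using dMq q0 by auto
  have dvM: "[:-1,1:]^i dvd (Polynomial.monom 1 q - 1 :: 'a poly)"
    unfolding hq[symmetric] using iq by (simp add: le_imp_power_dvd)
  have dvR: "[:-1,1:]^i dvd Rf g" for g
    unfolding Rf_def by (rule dvd_mod) (simp_all add: dvM Mq_def)
  have hzR: "Polynomial.coeff (Rf g) y = 0" if "q \<le> y" for g y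
  proof (cases "Rf g = 0")
    case False
    hence "degree (Rf g) < q" unfolding Rf_def using degree_mod_less[OF Mq0] dMq by metis
    thus ?thesis using that by (auto intro: coeff_eq_0)
  qed simp
  have lower: "N * (b + i) \<le> b_dist b c c'" if cc: "c \<in> {cwf g | g. True}" "c' \<in> {cwf g | g. True}" "c \<noteq> c'" for c c'
  proof -
    obtain g g' where gg: "c = cwf g" "c' = cwf g'" using cc by auto
    define D where "D = Rf g - Rf g'"
    have bd: "b_dist b c c' = N * card {j. j<q \<and> (\<exists>l<b. Polynomial.coeff (Rf g) ((j+l) mod q) \<noteq> Polynomial.coeff (Rf g') ((j+l) mod q))}"
      by (rule bdist_formula[OF _ _ nN q0]) (simp_all add: gg cwf_def)
    have D0: "D \<noteq> 0" using cc(3) gg unfolding D_def cwf_def by auto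
    have dD: "degree D < q"
    proof -
      have "degree D \<le> q - 1" by (rule degree_le) (use hzR in \<open>simp add: D_def\<close>)
      thus ?thesis using q0 by simp
    qed
    have dvD: "[:-1,1:]^i dvd D" unfolding D_def using dvR by (simp add: dvd_diff)
    have hyp: "\<forall>a<q. \<exists>x<q. i \<le> x \<and> Polynomial.coeff D ((a + x) mod q) \<noteq> 0" by (rule rot_hyp[OF D0 dD dvD dvM])
    have ex: "\<exists>x<q. Polynomial.coeff D x \<noteq> 0" using D0 dD by (intro exI[of _ "degree D"]) simp
    have "b + i \<le> card {j. j<q \<and> (\<exists>l<b. Polynomial.coeff D ((j+l) mod q) \<noteq> 0)}"
      by (rule comb[OF bq assms(10) ex hyp])
    also have "{j. j<q \<and> (\<exists>l<b. Polynomial.coeff D ((j+l) mod q) \<noteq> 0)} =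
       {j. j<q \<and> (\<exists>l<b. Polynomial.coeff (Rf g) ((j+l) mod q) \<noteq> Polynomial.coeff (Rf g') ((j+l) mod q))}"
      unfolding D_def by simp
    finally show ?thesis unfolding bd by simp
  qed
  have R1: "Rf 1 = [:-1,1:]^i" unfolding Rf_def using iq dMq
    by (simp add: mod_poly_less degree_linear_power)
  have R0: "Rf 0 = 0" unfolding Rf_def by simp
  have c1i: "Polynomial.coeff ([:-1,1:]^i :: 'a poly) i = 1"
    using lead_coeff_power[of "[:-1,1:] :: 'a poly" i] by (simp add: degree_linear_power)
  have ne: "cwf 1 \<noteq> cwf 0"
  proof
    assume "cwf 1 = cwf 0"
    hence "cwf 1 ! i = cwf 0 ! i" by simp
    moreover have "i < p ^ e" using iq nN N1 by (metis less_le_trans mult_le_mono1 mult_1)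
    ultimately show False using iq c1i R1 R0 unfolding cwf_def by simp
  qed
  have upper: "b_dist b (cwf 1) (cwf 0) \<le> N * (b + i)"
  proof -
    have bd: "b_dist b (cwf 1) (cwf 0) = N * card {j. j<q \<and> (\<exists>l<b. Polynomial.coeff (Rf 1) ((j+l) mod q) \<noteq> Polynomial.coeff (Rf 0) ((j+l) mod q))}"
      by (rule bdist_formula[OF _ _ nN q0]) (simp_all add: cwf_def)
    have sub: "{j. j<q \<and> (\<exists>l<b. Polynomial.coeff (Rf 1) ((j+l) mod q) \<noteq> Polynomial.coeff (Rf 0) ((j+l) mod q))}
               \<subseteq> {..i} \<union> {q + 1 - b..<q}"
    proof
      fix j assume "j \<in> {j. j<q \<and> (\<exists>l<b. Polynomial.coeff (Rf 1) ((j+l) mod q) \<noteq> Polynomial.coeff (Rf 0) ((j+l) mod q))}"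
      then obtain l where jl: "j < q" "l < b" "Polynomial.coeff ([:-1,1:]^i :: 'a poly) ((j+l) mod q) \<noteq> 0"
        using R1 R0 by auto
      have "(j+l) mod q \<le> i"
        using jl(3) by (metis coeff_eq_0 degree_linear_power not_le)
      thus "j \<in> {..i} \<union> {q + 1 - b..<q}"
      proof (cases "j + l < q")
        case True then show ?thesis using \<open>(j+l) mod q \<le> i\<close> by simp
      next
        case False then show ?thesis using jl by auto
      qed
    qed
    have "card {j. j<q \<and> (\<exists>l<b. Polynomial.coeff (Rf 1) ((j+l) mod q) \<noteq> Polynomial.coeff (Rf 0) ((j+l) mod q))}
          \<le> card ({..i} \<union> {q + 1 - b..<q})" by (rule card_mono[OF _ sub]) simp
    also have "\<dots> \<le> card {..i} + card {q + 1 - b..<q}" by (rule card_Un_le)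
    also have "\<dots> = b + i" using bq assms(7) by simp
    finally show ?thesis unfolding bd by simp
  qed
  have exact: "b_dist b (cwf 1) (cwf 0) = N * (b + i)"
    using upper lower[of "cwf 1" "cwf 0"] ne by fastforce
  have "min_b_dist b (cyclic_code (p ^ e) (p ^ e - q + i) :: 'a list set) = N * (b + i)"
    unfolding min_b_dist_def cweq
  proof (rule cInf_eq_minimum)
    show "N * (b + i) \<in> {b_dist b c c' | c c'. c \<in> {cwf g | g. True} \<and> c' \<in> {cwf g | g. True} \<and> c \<noteq> c'}"
      using exact[symmetric] ne by blast
  next
    fix x assume "x \<in> {b_dist b c c' | c c'. c \<in> {cwf g | g. True} \<and> c' \<in> {cwf g | g. True} \<and> c \<noteq> c'}"
    then show "N * (b + i) \<le> x" using lower by blast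
  qed
  thus ?thesis unfolding q_def N_def .
qed


end
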